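(* Let $n\ge1$. Let $A=\begin{pmatrix}b&0&0\\1&0&k\\0&1&t\end{pmatrix}$, $G_1=(b(2b-t),\,2b-t,\,2)^T$, $G_{n+1}=A^nG_1$ in $\mathbb{C}[b,t,k]$ ($\deg b=\deg t=1,\deg k=2$), and let $E=\begin{pmatrix}b&2q&2q\\1&r_1-b&0\\1&0&r_2-b\end{pmatrix}$, $R_1=(b,1,1)^T$, $R_{n+1}=E^nR_1$ in $\mathbb{C}[b,q,r_1,r_2]$ ($\deg b=\deg r_1=\deg r_2=1$, $\deg q=2$). Then $b\mapsto b$, $t\mapsto r_1+r_2-2b$, $k\mapsto 4q-(b-r_1)(b-r_2)$ defines a morphism of graded $\mathbb{C}$-algebras $$\mathbb{C}[b,t,k]/(G_{n+1})\longrightarrow\mathbb{C}[b,q,r_1,r_2]/\big(q(r_1+r_2-4b),R_{n+1}\big),$$ and this morphism is injective in degrees $\le n+2$.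
   Context: Here $(G_{n+1})$ and $(R_{n+1})$ denote the ideals generated by the three entries of the respective column vectors. *)

theory Defs
  imports Complex_Main "HOL-Library.Poly_Mapping"
begin

type_synonym ('v, 'a) mpoly = "('v \<Rightarrow>\<^sub>0 nat) \<Rightarrow>\<^sub>0 'a"

definition Var :: "'v \<Rightarrow> ('v, 'a::comm_semiring_1) mpoly" where
  "Var v = Poly_Mapping.single (Poly_Mapping.single v 1) 1"

definition Cst :: "'a::comm_semiring_1 \<Rightarrow> ('v, 'a) mpoly" where
  "Cst c = Poly_Mapping.single 0 c"

definition subst :: "('v \<Rightarrow> ('w, 'a::comm_semiring_1) mpoly) \<Rightarrow> ('v, 'a) mpoly \<Rightarrow> ('w, 'a) mpoly" where
  "subst s f = (\<Sum>mon\<in>Poly_Mapping.keys f. Cst (Poly_Mapping.lookup f mon) * (\<Prod>v\<in>Poly_Mapping.keys (mon::'v \<Rightarrow>\<^sub>0 nat). s v ^ Poly_Mapping.lookup mon v))"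

definition wdeg :: "('v \<Rightarrow> nat) \<Rightarrow> ('v \<Rightarrow>\<^sub>0 nat) \<Rightarrow> nat" where
  "wdeg w m = (\<Sum>v\<in>Poly_Mapping.keys m. w v * Poly_Mapping.lookup m v)"

text \<open>f is homogeneous of (weighted) degree d (the zero polynomial is homogeneous of every degree).\<close>
definition homogeneous :: "('v \<Rightarrow> nat) \<Rightarrow> nat \<Rightarrow> ('v, 'a::zero) mpoly \<Rightarrow> bool" where
  "homogeneous w d f \<longleftrightarrow> (\<forall>m\<in>Poly_Mapping.keys f. wdeg w m = d)"

definition ideal_gen :: "'a::comm_ring_1 list \<Rightarrow> 'a set" where
  "ideal_gen xs = {\<Sum>i<length xs. c i * xs ! i | c. True}"

datatype V1 = vb | vt | vk

fun w1 :: "V1 \<Rightarrow> nat" where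
  "w1 vb = 1" | "w1 vt = 1" | "w1 vk = 2"

datatype V2 = ub | uq | ur1 | ur2

fun w2 :: "V2 \<Rightarrow> nat" where
  "w2 ub = 1" | "w2 uq = 2" | "w2 ur1 = 1" | "w2 ur2 = 1"

type_synonym P1 = "(V1, complex) mpoly"
type_synonym P2 = "(V2, complex) mpoly"

text \<open>Column vectors of length 3 as triples; multiplication by the matrix
  A = ((b,0,0),(1,0,k),(0,1,t)).\<close>
definition Amul :: "P1 \<times> P1 \<times> P1 \<Rightarrow> P1 \<times> P1 \<times> P1" where
  "Amul = (\<lambda>(x, y, z). (Var vb * x, x + Var vk * z, y + Var vt * z))"

definition G1 :: "P1 \<times> P1 \<times> P1" where
  "G1 = (Var vb * (Cst 2 * Var vb - Var vt), Cst 2 * Var vb - Var vt, Cst 2)"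

definition G :: "nat \<Rightarrow> P1 \<times> P1 \<times> P1" where
  "G j = (Amul ^^ (j - 1)) G1"

text \<open>Multiplication by E = ((b,2q,2q),(1,r1-b,0),(1,0,r2-b)).\<close>
definition Emul :: "P2 \<times> P2 \<times> P2 \<Rightarrow> P2 \<times> P2 \<times> P2" where
  "Emul = (\<lambda>(x, y, z).
     (Var ub * x + Cst 2 * Var uq * y + Cst 2 * Var uq * z,
      x + (Var ur1 - Var ub) * y,
      x + (Var ur2 - Var ub) * z))"

definition R1 :: "P2 \<times> P2 \<times> P2" where
  "R1 = (Var ub, 1, 1)"

definition R :: "nat \<Rightarrow> P2 \<times> P2 \<times> P2" where
  "R j = (Emul ^^ (j - 1)) R1"

definition entries :: "'a \<times> 'a \<times> 'a \<Rightarrow> 'a list" where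
  "entries = (\<lambda>(x, y, z). [x, y, z])"

fun phi_img :: "V1 \<Rightarrow> P2" where
  "phi_img vb = Var ub"
| "phi_img vt = Var ur1 + Var ur2 - Cst 2 * Var ub"
| "phi_img vk = Cst 4 * Var uq - (Var ub - Var ur1) * (Var ub - Var ur2)"

definition phi :: "P1 \<Rightarrow> P2" where
  "phi = subst phi_img"

definition JG :: "nat \<Rightarrow> P1 set" where
  "JG n = ideal_gen (entries (G (n + 1)))"

definition IR :: "nat \<Rightarrow> P2 set" where
  "IR n = ideal_gen (Var uq * (Var ur1 + Var ur2 - Cst 4 * Var ub) # entries (R (n + 1)))"

end

theory Submission
  imports Defs
begin


lemma Cst_add: "Cst (a + b) = Cst a + Cst b" by (simp add: Cst_def single_add)
lemma Cst_mult: "Cst (a * b) = Cst a * Cst b" by (simp add: Cst_def mult_single)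
lemma Cst_0[simp]: "Cst 0 = 0" by (simp add: Cst_def)
lemma Cst_1[simp]: "Cst 1 = 1" by (simp add: Cst_def)
lemma Cst_diff: "Cst (a - b) = Cst a - Cst b" by (simp add: Cst_def single_diff)
lemma Cst_uminus: "Cst (- a) = - Cst a" by (simp add: Cst_def single_uminus)
lemma Cst_numeral[simp]: "Cst (numeral k) = numeral k" by (simp add: Cst_def)
lemma Cst_of_nat: "Cst (of_nat k) = of_nat k" by (simp add: Cst_def)
lemma Cst_power: "Cst (a ^ k) = Cst a ^ k" by (induct k) (simp_all add: Cst_mult)
lemma Cst_inj: "Cst a = Cst b \<longleftrightarrow> a = b"
  by (metis Cst_def lookup_single_eq)
lemmas Cst_simps = Cst_add Cst_mult Cst_diff Cst_uminus Cst_power Cst_of_nat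

definition monv :: "('v \<Rightarrow> ('w, 'a::comm_semiring_1) mpoly) \<Rightarrow> ('v \<Rightarrow>\<^sub>0 nat) \<Rightarrow> ('w, 'a) mpoly" where
  "monv s m = (\<Prod>v\<in>Poly_Mapping.keys m. s v ^ Poly_Mapping.lookup m v)"

lemma monv_superset:
  assumes "finite A" "Poly_Mapping.keys m \<subseteq> A"
  shows "monv s m = (\<Prod>v\<in>A. s v ^ Poly_Mapping.lookup m v)"
  unfolding monv_def
  by (rule prod.mono_neutral_left) (use assms in \<open>auto simp: in_keys_iff\<close>)

lemma monv_add: "monv s (m1 + m2) = monv s m1 * monv s m2"
proof -
  let ?A = "Poly_Mapping.keys m1 \<union> Poly_Mapping.keys m2"
  have "monv s (m1 + m2) = (\<Prod>v\<in>?A. s v ^ Poly_Mapping.lookup (m1 + m2) v)"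
    by (rule monv_superset) (auto simp: keys_add)
  also have "\<dots> = (\<Prod>v\<in>?A. s v ^ Poly_Mapping.lookup m1 v) * (\<Prod>v\<in>?A. s v ^ Poly_Mapping.lookup m2 v)"
    by (simp add: lookup_add power_add prod.distrib)
  also have "\<dots> = monv s m1 * monv s m2"
    by (simp add: monv_superset[of ?A m1 s] monv_superset[of ?A m2 s])
  finally show ?thesis .
qed

lemma monv_0[simp]: "monv s 0 = 1" by (simp add: monv_def)

lemma monv_single: "monv s (Poly_Mapping.single v k) = s v ^ k"
  by (simp add: monv_def)

lemma subst_superset:
  assumes "finite A" "Poly_Mapping.keys f \<subseteq> A"
  shows "subst s f = (\<Sum>m\<in>A. Cst (Poly_Mapping.lookup f m) * monv s m)"
  unfolding subst_def monv_def[symmetric]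
  by (rule sum.mono_neutral_left) (use assms in \<open>auto simp: in_keys_iff\<close>)

lemma subst_0[simp]: "subst s 0 = 0" by (simp add: subst_def)

lemma subst_add[simp]: "subst s (f + g) = subst s f + subst s g"
proof -
  let ?A = "Poly_Mapping.keys f \<union> Poly_Mapping.keys g"
  have "subst s (f + g) = (\<Sum>m\<in>?A. Cst (Poly_Mapping.lookup (f + g) m) * monv s m)"
    by (rule subst_superset) (auto simp: keys_add)
  also have "\<dots> = (\<Sum>m\<in>?A. Cst (Poly_Mapping.lookup f m) * monv s m) + (\<Sum>m\<in>?A. Cst (Poly_Mapping.lookup g m) * monv s m)"
    by (simp add: lookup_add Cst_add distrib_right sum.distrib)
  also have "\<dots> = subst s f + subst s g"
    by (simp add: subst_superset[of ?A f s] subst_superset[of ?A g s])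
  finally show ?thesis .
qed

lemma subst_single: "subst s (Poly_Mapping.single m c) = Cst c * monv s m"
  by (cases "c = 0") (simp_all add: subst_def monv_def)

lemma subst_sum: "subst s (\<Sum>i\<in>I. f i) = (\<Sum>i\<in>I. subst s (f i))"
  by (induct I rule: infinite_finite_induct) simp_all

lemma poly_expand: "(p::'a \<Rightarrow>\<^sub>0 'b::comm_monoid_add) = (\<Sum>m\<in>Poly_Mapping.keys p. Poly_Mapping.single m (Poly_Mapping.lookup p m))"
proof (rule poly_mapping_eqI)
  fix k
  show "Poly_Mapping.lookup p k = Poly_Mapping.lookup (\<Sum>m\<in>Poly_Mapping.keys p. Poly_Mapping.single m (Poly_Mapping.lookup p m)) k"
    by (cases "k \<in> Poly_Mapping.keys p")
       (auto simp: lookup_sum lookup_single when_def in_keys_iff sum.delta)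
qed

lemma subst_mult[simp]: "subst s (f * g) = subst s f * subst s g"
proof -
  let ?K1 = "Poly_Mapping.keys f" and ?K2 = "Poly_Mapping.keys g"
  have "f * g = (\<Sum>m1\<in>?K1. Poly_Mapping.single m1 (Poly_Mapping.lookup f m1)) * (\<Sum>m2\<in>?K2. Poly_Mapping.single m2 (Poly_Mapping.lookup g m2))"
    using poly_expand[of f] poly_expand[of g] by simp
  also have "\<dots> = (\<Sum>m1\<in>?K1. \<Sum>m2\<in>?K2. Poly_Mapping.single (m1 + m2) (Poly_Mapping.lookup f m1 * Poly_Mapping.lookup g m2))"
    by (simp add: sum_product mult_single)
  finally have "subst s (f * g) = (\<Sum>m1\<in>?K1. \<Sum>m2\<in>?K2. (Cst (Poly_Mapping.lookup f m1) * monv s m1) * (Cst (Poly_Mapping.lookup g m2) * monv s m2))"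
    by (simp add: subst_sum subst_single monv_add Cst_mult algebra_simps)
  also have "\<dots> = (\<Sum>m1\<in>?K1. Cst (Poly_Mapping.lookup f m1) * monv s m1) * (\<Sum>m2\<in>?K2. Cst (Poly_Mapping.lookup g m2) * monv s m2)"
    by (simp add: sum_product)
  also have "\<dots> = subst s f * subst s g"
    by (simp add: subst_def monv_def)
  finally show ?thesis .
qed

lemma subst_1[simp]: "subst s 1 = 1"
  using subst_single[of s 0 1] by (simp add: Cst_def)

lemma subst_Cst[simp]: "subst s (Cst c) = Cst c"
  using subst_single[of s 0 c] by (simp add: Cst_def)

lemma subst_Var[simp]: "subst s (Var v) = s v"
  using subst_single[of s "Poly_Mapping.single v 1" 1] by (simp add: Var_def monv_single)

lemma subst_uminus[simp]: "subst s (- f) = - subst s (f :: ('v, 'a::comm_ring_1) mpoly)"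
  using subst_add[of s f "- f"] by (simp add: eq_neg_iff_add_eq_0 add.commute)

lemma subst_diff[simp]: "subst s (f - g) = subst s f - subst s (g :: ('v, 'a::comm_ring_1) mpoly)"
  using subst_add[of s f "- g"] by simp

lemma subst_power[simp]: "subst s (f ^ k) = subst s f ^ k"
  by (induct k) simp_all

lemma subst_prod: "subst s (\<Prod>i\<in>I. f i) = (\<Prod>i\<in>I. subst s (f i))"
  by (induct I rule: infinite_finite_induct) simp_all

lemma subst_numeral[simp]: "subst s (numeral k) = numeral k"
  using subst_Cst[of s "numeral k"] by simp

lemma subst_subst: "subst s2 (subst s1 f) = subst (\<lambda>v. subst s2 (s1 v)) f"
  unfolding subst_def[of s1] by (simp add: subst_sum subst_prod subst_def[of "\<lambda>v. subst s2 (s1 v)"])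



lemma wdeg_superset:
  assumes "finite A" "Poly_Mapping.keys m \<subseteq> A"
  shows "wdeg w m = (\<Sum>v\<in>A. w v * Poly_Mapping.lookup m v)"
  unfolding wdeg_def
  by (rule sum.mono_neutral_left) (use assms in \<open>auto simp: in_keys_iff\<close>)

lemma wdeg_add: "wdeg w (m1 + m2) = wdeg w m1 + wdeg w m2"
proof -
  let ?A = "Poly_Mapping.keys m1 \<union> Poly_Mapping.keys m2"
  have "wdeg w (m1 + m2) = (\<Sum>v\<in>?A. w v * Poly_Mapping.lookup (m1 + m2) v)"
    by (rule wdeg_superset) (auto simp: keys_add)
  also have "\<dots> = (\<Sum>v\<in>?A. w v * Poly_Mapping.lookup m1 v) + (\<Sum>v\<in>?A. w v * Poly_Mapping.lookup m2 v)"
    by (simp add: lookup_add sum.distrib algebra_simps)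
  also have "\<dots> = wdeg w m1 + wdeg w m2"
    by (simp add: wdeg_superset[of ?A m1 w] wdeg_superset[of ?A m2 w])
  finally show ?thesis .
qed

lemma wdeg_0[simp]: "wdeg w 0 = 0" by (simp add: wdeg_def)

lemma hom_0[simp]: "homogeneous w d 0" by (simp add: homogeneous_def)
lemma hom_add: 
  assumes "homogeneous w d p" "homogeneous w d q" shows "homogeneous w d (p + q)"
  using assms keys_add[of p q] unfolding homogeneous_def by auto
lemma hom_uminus: "homogeneous w d p \<Longrightarrow> homogeneous w d (- (p :: ('v, 'a::ab_group_add) mpoly))"
  unfolding homogeneous_def by (simp add: in_keys_iff)
lemma hom_diff: "homogeneous w d p \<Longrightarrow> homogeneous w d q \<Longrightarrow> homogeneous w d (p - (q :: ('v, 'a::ab_group_add) mpoly))"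
  using hom_add[of w d p "- q"] hom_uminus[of w d q] by simp

lemma hom_mult:
  assumes "homogeneous w d1 p" "homogeneous w d2 q"
  shows "homogeneous w (d1 + d2) (p * (q :: ('v, 'a::comm_semiring_1) mpoly))"
  unfolding homogeneous_def
proof
  fix m assume "m \<in> Poly_Mapping.keys (p * q)"
  then obtain a b where "m = a + b" "a \<in> Poly_Mapping.keys p" "b \<in> Poly_Mapping.keys q"
    using keys_mult[of p q] by blast
  then show "wdeg w m = d1 + d2" using assms by (simp add: wdeg_add homogeneous_def)
qed

lemma hom_single: "homogeneous w (wdeg w m) (Poly_Mapping.single m c)"
  unfolding homogeneous_def by simp

lemma hom_Cst[simp]: "homogeneous w 0 (Cst c)"
  unfolding Cst_def using hom_single[of w 0 c] by simp

lemma hom_1[simp]: "homogeneous w 0 (1 :: ('v, 'a::comm_semiring_1) mpoly)"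
  using hom_Cst[of w 1] by simp

lemma hom_numeral[simp]: "homogeneous w 0 (numeral k :: ('v, 'a::comm_semiring_1) mpoly)"
  using hom_Cst[of w "numeral k"] by simp

lemma hom_Var: "homogeneous w (w v) (Var v)"
  unfolding Var_def using hom_single[of w "Poly_Mapping.single v 1" 1] by (simp add: wdeg_def)

lemma hom_power: "homogeneous w d p \<Longrightarrow> homogeneous w (k * d) (p ^ k :: ('v, 'a::comm_semiring_1) mpoly)"
  by (induct k) (simp_all add: hom_mult)

lemma hom_sum: "(\<And>i. i \<in> I \<Longrightarrow> homogeneous w d (f i)) \<Longrightarrow> homogeneous w d (\<Sum>i\<in>I. f i)"
  by (induct I rule: infinite_finite_induct) (simp_all add: hom_add)

lemma hom_prod: "(\<And>i. i \<in> I \<Longrightarrow> homogeneous w (e i) (f i)) \<Longrightarrow> homogeneous w (\<Sum>i\<in>I. e i) (\<Prod>i\<in>I. (f i :: ('v, 'a::comm_semiring_1) mpoly))"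
  by (induct I rule: infinite_finite_induct) (simp_all add: hom_mult)

lemma hom_subst:
  assumes "\<And>v. homogeneous w' (w v) (s v)" "homogeneous w d f"
  shows "homogeneous w' d (subst s f)"
  unfolding subst_def
proof (rule hom_sum)
  fix m assume m: "m \<in> Poly_Mapping.keys f"
  have "homogeneous w' (\<Sum>v\<in>Poly_Mapping.keys m. Poly_Mapping.lookup m v * w v)
          (\<Prod>v\<in>Poly_Mapping.keys m. s v ^ Poly_Mapping.lookup m v)"
    by (rule hom_prod) (rule hom_power, rule assms(1))
  moreover have "(\<Sum>v\<in>Poly_Mapping.keys m. Poly_Mapping.lookup m v * w v) = d"
    using assms(2) m unfolding homogeneous_def wdeg_def by (simp add: mult.commute)
  ultimately show "homogeneous w' d (Cst (Poly_Mapping.lookup f m) * (\<Prod>v\<in>Poly_Mapping.keys m. s v ^ Poly_Mapping.lookup m v))"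
    using hom_mult[OF hom_Cst] by fastforce
qed

definition Hc :: "('v \<Rightarrow> nat) \<Rightarrow> nat \<Rightarrow> ('v, 'a::zero) mpoly \<Rightarrow> ('v, 'a) mpoly" where
  "Hc w d p = Poly_Mapping.mapp (\<lambda>m c. if wdeg w m = d then c else 0) p"

lemma lookup_Hc: "Poly_Mapping.lookup (Hc w d p) m = (if wdeg w m = d then Poly_Mapping.lookup p m else 0)"
  by (auto simp: Hc_def lookup_mapp when_def in_keys_iff)

lemma Hc_add: "Hc w d (p + q) = Hc w d p + Hc w d q"
  by (rule poly_mapping_eqI) (simp add: lookup_Hc lookup_add)

lemma Hc_0[simp]: "Hc w d 0 = 0"
  by (rule poly_mapping_eqI) (simp add: lookup_Hc)

lemma Hc_sum: "Hc w d (\<Sum>i\<in>I. f i) = (\<Sum>i\<in>I. Hc w d (f i))"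
  by (induct I rule: infinite_finite_induct) (simp_all add: Hc_add)

lemma Hc_hom: "homogeneous w d p \<Longrightarrow> Hc w d p = p"
  by (rule poly_mapping_eqI) (auto simp: lookup_Hc homogeneous_def in_keys_iff)

lemma Hc_hom_ne: "homogeneous w e p \<Longrightarrow> e \<noteq> d \<Longrightarrow> Hc w d p = 0"
  by (rule poly_mapping_eqI) (auto simp: lookup_Hc homogeneous_def in_keys_iff)

lemma Hc_homogeneous: "homogeneous w d (Hc w d p)"
  by (auto simp: homogeneous_def in_keys_iff lookup_Hc split: if_splits)

lemma Hc_mult:
  assumes g: "homogeneous w e (g :: ('v, 'a::comm_semiring_1) mpoly)"
  shows "Hc w d (g * h) = (if e \<le> d then g * Hc w (d - e) h else 0)"
proof -
  let ?K = "Poly_Mapping.keys h"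
  let ?t = "\<lambda>m. Poly_Mapping.single m (Poly_Mapping.lookup h m)"
  have hh: "h = (\<Sum>m\<in>?K. ?t m)" by (rule poly_expand)
  have gh: "g * h = (\<Sum>m\<in>?K. g * ?t m)"
    by (subst hh) (simp add: sum_distrib_left)
  have homt: "homogeneous w (e + wdeg w m) (g * ?t m)" for m
    by (rule hom_mult[OF g hom_single])
  have L: "Hc w d (g * ?t m) = (if e + wdeg w m = d then g * ?t m else 0)" for m
    using Hc_hom[OF homt[of m]] Hc_hom_ne[OF homt[of m]] by auto
  have R: "Hc w (d - e) (?t m) = (if wdeg w m = d - e then ?t m else 0)" for m
    using Hc_hom[OF hom_single[of w m]] Hc_hom_ne[OF hom_single[of w m]] by auto
  show ?thesis
  proof (cases "e \<le> d")
    case True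
    have "Hc w d (g * h) = (\<Sum>m\<in>?K. if e + wdeg w m = d then g * ?t m else 0)"
      by (simp add: gh Hc_sum L)
    also have "\<dots> = (\<Sum>m\<in>?K. g * (if wdeg w m = d - e then ?t m else 0))"
      by (rule sum.cong) (use True in auto)
    also have "\<dots> = g * Hc w (d - e) h"
      by (subst (2) hh) (simp add: Hc_sum R sum_distrib_left)
    finally show ?thesis using True by simp
  next
    case False
    have "Hc w d (g * h) = (\<Sum>m\<in>?K. if e + wdeg w m = d then g * ?t m else 0)"
      by (simp add: gh Hc_sum L)
    also have "\<dots> = 0"
      by (rule sum.neutral) (use False in auto)
    finally show ?thesis using False by simp
  qed
qed



instantiation V2 :: linorder
begin
fun enc2 :: "V2 \<Rightarrow> nat" where
  "enc2 ub = 0" | "enc2 uq = 1" | "enc2 ur1 = 2" | "enc2 ur2 = 3"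
definition less_eq_V2 :: "V2 \<Rightarrow> V2 \<Rightarrow> bool" where "less_eq_V2 a b \<longleftrightarrow> enc2 a \<le> enc2 b"
definition less_V2 :: "V2 \<Rightarrow> V2 \<Rightarrow> bool" where "less_V2 a b \<longleftrightarrow> enc2 a < enc2 b"
instance
proof
  have inj: "enc2 a = enc2 b \<Longrightarrow> a = b" for a b by (cases a; cases b; simp)
  fix x y z :: V2
  show "(x < y) = (x \<le> y \<and> \<not> y \<le> x)" by (auto simp: less_eq_V2_def less_V2_def)
  show "x \<le> x" by (simp add: less_eq_V2_def)
  show "x \<le> y \<Longrightarrow> y \<le> z \<Longrightarrow> x \<le> z" by (simp add: less_eq_V2_def)
  show "x \<le> y \<Longrightarrow> y \<le> x \<Longrightarrow> x = y" using inj by (simp add: less_eq_V2_def)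
  show "x \<le> y \<or> y \<le> x" by (auto simp: less_eq_V2_def)
qed
end

lemma "(a :: P2) * b = 0 \<Longrightarrow> a = 0 \<or> b = 0" by simp

abbreviation bb :: P2 where "bb \<equiv> Var ub"
abbreviation qq :: P2 where "qq \<equiv> Var uq"
abbreviation rr1 :: P2 where "rr1 \<equiv> Var ur1"
abbreviation rr2 :: P2 where "rr2 \<equiv> Var ur2"
abbreviation ss :: P2 where "ss \<equiv> rr1 + rr2 - 4 * bb"

abbreviation b1 :: P1 where "b1 \<equiv> Var vb"
abbreviation t1 :: P1 where "t1 \<equiv> Var vt"
abbreviation k1 :: P1 where "k1 \<equiv> Var vk"

lemma phi_simps[simp]:
  "phi (f + g) = phi f + phi g" "phi (f * g) = phi f * phi g" "phi (f - g) = phi f - phi g"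
  "phi (- f) = - phi f" "phi (f ^ k) = phi f ^ k" "phi 0 = 0" "phi 1 = 1" "phi (numeral n) = numeral n"
  "phi (Cst c) = Cst c"
  "phi b1 = bb" "phi t1 = rr1 + rr2 - 2 * bb" "phi k1 = 4 * qq - (bb - rr1) * (bb - rr2)"
  by (simp_all add: phi_def)

lemma Emul_simp: "Emul (x, y, z) = (bb * x + 2 * qq * y + 2 * qq * z, x + (rr1 - bb) * y, x + (rr2 - bb) * z)"
  by (simp add: Emul_def)
lemma Amul_simp: "Amul (x, y, z) = (b1 * x, x + k1 * z, y + t1 * z)"
  by (simp add: Amul_def)

lemma R_1: "R (Suc 0) = (bb, 1, 1)" by (simp add: R_def R1_def)
lemma R_step: "R (Suc (Suc k)) = Emul (R (Suc k))" by (simp add: R_def)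
lemma G_1: "G (Suc 0) = (b1 * (2 * b1 - t1), 2 * b1 - t1, 2)" by (simp add: G_def G1_def)
lemma G_step: "G (Suc (Suc k)) = Amul (G (Suc k))" by (simp add: G_def)

lemma hom_mult': "homogeneous w d1 p \<Longrightarrow> homogeneous w d2 q \<Longrightarrow> d = d1 + d2 \<Longrightarrow> homogeneous w d (p * (q :: ('v, 'a::comm_semiring_1) mpoly))"
  using hom_mult by blast

lemma hom_bb: "homogeneous w2 1 bb" using hom_Var[of w2 ub] by simp
lemma hom_qq: "homogeneous w2 2 qq" using hom_Var[of w2 uq] by simp
lemma hom_rr1: "homogeneous w2 1 rr1" using hom_Var[of w2 ur1] by simp
lemma hom_rr2: "homogeneous w2 1 rr2" using hom_Var[of w2 ur2] by simp
lemma hom_ss: "homogeneous w2 1 ss"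
  by (intro hom_diff hom_add hom_rr1 hom_rr2 hom_mult'[OF hom_numeral hom_bb]) simp
lemma hom_qs: "homogeneous w2 3 (qq * ss)"
  by (rule hom_mult'[OF hom_qq hom_ss]) simp

lemma R_hom: "homogeneous w2 (Suc k) (fst (R (Suc k))) \<and> homogeneous w2 k (fst (snd (R (Suc k))))
    \<and> homogeneous w2 k (snd (snd (R (Suc k))))"
proof (induct k)
  case 0 then show ?case using hom_bb by (simp add: R_1 One_nat_def)
next
  case (Suc k)
  obtain x y z where xyz: "R (Suc k) = (x, y, z)" by (cases "R (Suc k)") auto
  with Suc have hx: "homogeneous w2 (Suc k) x" and hy: "homogeneous w2 k y" and hz: "homogeneous w2 k z" by auto
  have h2q: "homogeneous w2 2 (2 * qq)" by (rule hom_mult'[OF hom_numeral hom_qq]) simp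
  have "homogeneous w2 (Suc (Suc k)) (bb * x + 2 * qq * y + 2 * qq * z)"
    by (intro hom_add hom_mult'[OF hom_bb hx] hom_mult'[OF h2q hy] hom_mult'[OF h2q hz]) simp_all
  moreover have "homogeneous w2 (Suc k) (x + (rr1 - bb) * y)"
    by (intro hom_add hx hom_mult'[OF hom_diff[OF hom_rr1 hom_bb] hy]) simp
  moreover have "homogeneous w2 (Suc k) (x + (rr2 - bb) * z)"
    by (intro hom_add hx hom_mult'[OF hom_diff[OF hom_rr2 hom_bb] hz]) simp
  ultimately show ?case by (simp add: R_step xyz Emul_simp)
qed

definition tau :: "P2 \<Rightarrow> P2" where
  "tau = subst (\<lambda>v. case v of ur1 \<Rightarrow> rr2 | ur2 \<Rightarrow> rr1 | _ \<Rightarrow> Var v)"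

lemma tau_simps[simp]:
  "tau (f + g) = tau f + tau g" "tau (f * g) = tau f * tau g" "tau (f - g) = tau f - tau g"
  "tau (- f) = - tau f" "tau (f ^ k) = tau f ^ k" "tau 0 = 0" "tau 1 = 1" "tau (numeral n) = numeral n"
  "tau (Cst c) = Cst c" "tau bb = bb" "tau qq = qq" "tau rr1 = rr2" "tau rr2 = rr1"
  by (simp_all add: tau_def)

lemma tau_phi: "tau (phi f) = phi f"
proof -
  have "tau (phi f) = subst (\<lambda>v. tau (phi_img v)) f" by (simp add: tau_def phi_def subst_subst)
  also have "(\<lambda>v. tau (phi_img v)) = phi_img"
  proof
    fix v show "tau (phi_img v) = phi_img v" by (cases v) (simp_all add: algebra_simps)
  qed
  finally show ?thesis by (simp add: phi_def)
qed

lemma tau_R: "tau (fst (R (Suc k))) = fst (R (Suc k)) \<and> tau (fst (snd (R (Suc k)))) = snd (snd (R (Suc k)))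
    \<and> tau (snd (snd (R (Suc k)))) = fst (snd (R (Suc k)))"
proof (induct k)
  case 0 then show ?case by (simp add: R_1)
next
  case (Suc k)
  obtain x y z where xyz: "R (Suc k) = (x, y, z)" by (cases "R (Suc k)") auto
  with Suc show ?case by (simp add: R_step Emul_simp algebra_simps)
qed

definition zeta :: "P2 \<Rightarrow> P2" where
  "zeta = subst (\<lambda>v. if v = uq then 0 else Var v)"

lemma zeta_simps[simp]:
  "zeta (f + g) = zeta f + zeta g" "zeta (f * g) = zeta f * zeta g" "zeta (f - g) = zeta f - zeta g"
  "zeta (- f) = - zeta f" "zeta (f ^ k) = zeta f ^ k" "zeta 0 = 0" "zeta 1 = 1" "zeta (numeral n) = numeral n"
  "zeta (Cst c) = Cst c" "zeta bb = bb" "zeta qq = 0" "zeta rr1 = rr1" "zeta rr2 = rr2"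
  by (simp_all add: zeta_def)

fun xh :: "nat \<Rightarrow> P2" where
  "xh 0 = 0"
| "xh (Suc k) = bb * xh k + 2 * (fst (snd (R (Suc k))) + snd (snd (R (Suc k))))"

lemma R_x: "fst (R (Suc k)) = bb ^ Suc k + qq * xh k"
proof (induct k)
  case 0 then show ?case by (simp add: R_1)
next
  case (Suc k)
  obtain x y z where xyz: "R (Suc k) = (x, y, z)" by (cases "R (Suc k)") auto
  with Suc show ?case by (simp add: R_step Emul_simp algebra_simps)
qed

lemma zeta_R_x: "zeta (fst (R (Suc k))) = bb ^ Suc k"
  by (simp add: R_x)

lemma PG:
  "\<exists>m1 m2 m3. phi (fst (G (Suc k))) = - ss * fst (R (Suc k)) + qq * ss * m1
     \<and> phi (fst (snd (G (Suc k)))) = 2 * fst (R (Suc k)) - (rr2 - bb) * fst (snd (R (Suc k))) - (rr1 - bb) * snd (snd (R (Suc k))) + qq * ss * m2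
     \<and> phi (snd (snd (G (Suc k)))) = fst (snd (R (Suc k))) + snd (snd (R (Suc k))) + qq * ss * m3"
proof (induct k)
  case 0
  show ?case by (rule exI[of _ 0])+ (simp add: R_1 G_1 algebra_simps)
next
  case (Suc k)
  obtain x y z where xyz: "R (Suc k) = (x, y, z)" by (cases "R (Suc k)") auto
  obtain X Y Z where XYZ: "G (Suc k) = (X, Y, Z)" by (cases "G (Suc k)") auto
  from Suc obtain m1 m2 m3 where
    h1: "phi X = - ss * x + qq * ss * m1" and
    h2: "phi Y = 2 * x - (rr2 - bb) * y - (rr1 - bb) * z + qq * ss * m2" and
    h3: "phi Z = y + z + qq * ss * m3"
    by (auto simp: xyz XYZ)
  have e1: "phi (fst (G (Suc (Suc k)))) = - ss * fst (R (Suc (Suc k))) + qq * ss * (bb * m1 + 2 * (y + z))"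
    by (simp add: R_step G_step xyz XYZ Emul_simp Amul_simp h1 h2 h3) algebra
  have e2: "phi (fst (snd (G (Suc (Suc k))))) = 2 * fst (R (Suc (Suc k))) - (rr2 - bb) * fst (snd (R (Suc (Suc k)))) - (rr1 - bb) * snd (snd (R (Suc (Suc k)))) + qq * ss * (m1 + (4 * qq - (bb - rr1) * (bb - rr2)) * m3)"
    by (simp add: R_step G_step xyz XYZ Emul_simp Amul_simp h1 h2 h3) algebra
  have e3: "phi (snd (snd (G (Suc (Suc k))))) = fst (snd (R (Suc (Suc k)))) + snd (snd (R (Suc (Suc k)))) + qq * ss * (m2 + (rr1 + rr2 - 2 * bb) * m3)"
    by (simp add: R_step G_step xyz XYZ Emul_simp Amul_simp h1 h2 h3) algebra
  from e1 e2 e3 show ?case by blast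
qed



lemma Var_pow: "(Var v :: ('v, 'a::comm_semiring_1) mpoly) ^ e = Poly_Mapping.single (Poly_Mapping.single v e) 1"
proof (induct e)
  case 0 then show ?case by simp
next
  case (Suc e)
  then show ?case by (simp add: Var_def mult_single single_add[symmetric] add.commute)
qed

lemma prod_singles: "finite A \<Longrightarrow> (\<Prod>v\<in>A. (Poly_Mapping.single (f v) 1 :: ('v, 'a::comm_semiring_1) mpoly)) = Poly_Mapping.single (\<Sum>v\<in>A. f v) 1"
  by (induct A rule: finite_induct) (simp_all add: mult_single)

lemma monv_Var: "monv Var m = (Poly_Mapping.single m 1 :: ('v, 'a::comm_semiring_1) mpoly)"
proof -
  have "monv Var m = (\<Prod>v\<in>Poly_Mapping.keys m. (Poly_Mapping.single (Poly_Mapping.single v (Poly_Mapping.lookup m v)) 1 :: ('v, 'a) mpoly))"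
    by (simp add: monv_def Var_pow)
  also have "\<dots> = Poly_Mapping.single (\<Sum>v\<in>Poly_Mapping.keys m. Poly_Mapping.single v (Poly_Mapping.lookup m v)) 1"
    by (simp add: prod_singles)
  also have "(\<Sum>v\<in>Poly_Mapping.keys m. Poly_Mapping.single v (Poly_Mapping.lookup m v)) = m"
    by (rule poly_expand[symmetric])
  finally show ?thesis .
qed

lemma Cst_single: "Cst c * Poly_Mapping.single m 1 = Poly_Mapping.single m c"
  by (simp add: Cst_def mult_single)

definition kappa :: "V1 \<Rightarrow> P1" where "kappa v = (if v = vk then 0 else Var v)"

lemma monv_kappa: "monv kappa m = (if Poly_Mapping.lookup m vk = 0 then Poly_Mapping.single m 1 else 0)"
proof (cases "Poly_Mapping.lookup m vk = 0")
  case True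
  have "monv kappa m = monv Var m"
    unfolding monv_def
    by (rule prod.cong) (use True in \<open>auto simp: kappa_def in_keys_iff\<close>)
  then show ?thesis using True by (simp add: monv_Var)
next
  case False
  then have "vk \<in> Poly_Mapping.keys m" by (simp add: in_keys_iff)
  moreover have "kappa vk ^ Poly_Mapping.lookup m vk = 0" using False by (simp add: kappa_def power_0_left)
  ultimately have "monv kappa m = 0" unfolding monv_def
    by (metis finite_keys prod_zero)
  then show ?thesis using False by simp
qed

lemma lookup_subst_kappa:
  "Poly_Mapping.lookup (subst kappa g) m0 = (if Poly_Mapping.lookup m0 vk = 0 then Poly_Mapping.lookup g m0 else 0)"
proof -
  have eq: "subst kappa g = (\<Sum>m\<in>Poly_Mapping.keys g. if Poly_Mapping.lookup m vk = 0 then Poly_Mapping.single m (Poly_Mapping.lookup g m) else 0)"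
    unfolding subst_def monv_def[symmetric] by (rule sum.cong) (simp_all add: monv_kappa Cst_single)
  have "Poly_Mapping.lookup (subst kappa g) m0 = (\<Sum>m\<in>Poly_Mapping.keys g. Poly_Mapping.lookup (if Poly_Mapping.lookup m vk = 0 then Poly_Mapping.single m (Poly_Mapping.lookup g m) else 0) m0)"
    unfolding eq lookup_sum ..
  also have "\<dots> = (\<Sum>m\<in>Poly_Mapping.keys g. if m = m0 then (if Poly_Mapping.lookup m vk = 0 then Poly_Mapping.lookup g m else 0) else 0)"
    by (rule sum.cong[OF refl]) (auto simp: lookup_single when_def)
  also have "\<dots> = (if m0 \<in> Poly_Mapping.keys g then (if Poly_Mapping.lookup m0 vk = 0 then Poly_Mapping.lookup g m0 else 0) else 0)"
    by (rule sum.delta[OF finite_keys])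
  finally show ?thesis by (auto simp: in_keys_iff)
qed

definition sig2 :: "V2 \<Rightarrow> P1" where
  "sig2 v = (case v of ub \<Rightarrow> b1 | uq \<Rightarrow> 0 | ur1 \<Rightarrow> t1 + b1 | ur2 \<Rightarrow> b1)"

lemma zeta_phi_kappa: "subst sig2 (zeta (phi g)) = subst kappa g"
proof -
  have "subst sig2 (zeta (phi g)) = subst (\<lambda>v. subst sig2 (zeta (phi_img v))) g"
    by (simp add: zeta_def phi_def subst_subst)
  also have "(\<lambda>v. subst sig2 (zeta (phi_img v))) = kappa"
  proof
    fix v show "subst sig2 (zeta (phi_img v)) = kappa v"
      by (cases v) (simp_all add: kappa_def sig2_def zeta_def)
  qed
  finally show ?thesis .
qed

lemma Var_inj: "(Var a :: ('v, 'a::comm_semiring_1) mpoly) = Var b \<Longrightarrow> a = b"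
proof -
  assume "(Var a :: ('v, 'a) mpoly) = Var b"
  then have "Poly_Mapping.lookup (Var a :: ('v, 'a) mpoly) (Poly_Mapping.single a 1) = Poly_Mapping.lookup (Var b :: ('v, 'a) mpoly) (Poly_Mapping.single a 1)" by simp
  then have "Poly_Mapping.single b (1::nat) = Poly_Mapping.single a 1"
    by (simp add: Var_def lookup_single when_def split: if_splits)
  then have "Poly_Mapping.lookup (Poly_Mapping.single b (1::nat)) a = Poly_Mapping.lookup (Poly_Mapping.single a 1) a" by simp
  then show "a = b" by (simp add: lookup_single when_def split: if_splits)
qed

lemma bb_ne_rr1: "bb - rr1 \<noteq> 0" using Var_inj[of ub ur1] by force
lemma bb_ne_rr2: "bb - rr2 \<noteq> 0" using Var_inj[of ub ur2] by force
lemma qq_ne0: "qq \<noteq> 0"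
  by (metis Var_def lookup_single_eq one_neq_zero lookup_zero)

lemma INJ_aux:
  "\<forall>g. (\<forall>m\<in>Poly_Mapping.keys g. Poly_Mapping.lookup m vk < N) \<longrightarrow> zeta (phi g) = 0 \<longrightarrow> g = 0"
proof (induct N)
  case 0
  show ?case
  proof (intro allI impI)
    fix g :: P1
    assume "\<forall>m\<in>Poly_Mapping.keys g. Poly_Mapping.lookup m vk < 0"
    then have "Poly_Mapping.keys g = {}" by auto
    then show "g = 0" by simp
  qed
next
  case (Suc N)
  show ?case
  proof (intro allI impI)
    fix g :: P1
    assume bnd: "\<forall>m\<in>Poly_Mapping.keys g. Poly_Mapping.lookup m vk < Suc N" and z: "zeta (phi g) = 0"
    have "subst kappa g = 0" using zeta_phi_kappa[of g] z by simp
    then have nz: "Poly_Mapping.lookup m vk \<noteq> 0" if "m \<in> Poly_Mapping.keys g" for m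
      using that lookup_subst_kappa[of g m] by (auto simp: in_keys_iff split: if_splits)
    define g' where "g' = (\<Sum>m\<in>Poly_Mapping.keys g. Poly_Mapping.single (m - Poly_Mapping.single vk 1) (Poly_Mapping.lookup g m))"
    have spl: "Poly_Mapping.single vk 1 + (m - Poly_Mapping.single vk 1) = m" if "m \<in> Poly_Mapping.keys g" for m
      by (rule poly_mapping_eqI) (use nz[OF that] in \<open>simp add: lookup_add lookup_minus lookup_single when_def\<close>)
    have gg: "g = k1 * g'"
    proof -
      have "k1 * g' = (\<Sum>m\<in>Poly_Mapping.keys g. Poly_Mapping.single m (Poly_Mapping.lookup g m))"
        unfolding g'_def sum_distrib_left
      proof (rule sum.cong[OF refl])
        fix m assume "m \<in> Poly_Mapping.keys g"
        show "k1 * Poly_Mapping.single (m - Poly_Mapping.single vk 1) (Poly_Mapping.lookup g m) = Poly_Mapping.single m (Poly_Mapping.lookup g m)"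
          by (simp only: Var_def mult_single spl[OF \<open>m \<in> Poly_Mapping.keys g\<close>] mult_1)
      qed
      then show ?thesis by (simp add: poly_expand[symmetric])
    qed
    have "zeta (phi (k1 * g')) = 0" using z gg by simp
    then have "zeta (phi k1) * zeta (phi g') = 0" by (simp only: phi_simps(2) zeta_simps(2))
    moreover have "zeta (phi k1) \<noteq> 0" using bb_ne_rr1 bb_ne_rr2 by simp
    ultimately have z': "zeta (phi g') = 0" using no_zero_divisors by blast
    have "\<forall>m\<in>Poly_Mapping.keys g'. Poly_Mapping.lookup m vk < N"
    proof
      fix m assume "m \<in> Poly_Mapping.keys g'"
      then have "m \<in> (\<Union>m0\<in>Poly_Mapping.keys g. Poly_Mapping.keys (Poly_Mapping.single (m0 - Poly_Mapping.single vk 1) (Poly_Mapping.lookup g m0)))"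
        unfolding g'_def by (rule subsetD[OF keys_sum])
      then obtain m0 where m0: "m0 \<in> Poly_Mapping.keys g" "m \<in> Poly_Mapping.keys (Poly_Mapping.single (m0 - Poly_Mapping.single vk 1) (Poly_Mapping.lookup g m0))"
        by (rule UN_E)
      then have "m = m0 - Poly_Mapping.single vk 1" by (simp split: if_splits)
      then show "Poly_Mapping.lookup m vk < N" using bnd m0(1) nz[OF m0(1)]
        by (auto simp: lookup_minus)
    qed
    with Suc z' have "g' = 0" by blast
    then show "g = 0" by (simp add: gg)
  qed
qed

lemma INJ: "zeta (phi g) = 0 \<Longrightarrow> g = 0"
proof -
  assume z: "zeta (phi g) = 0"
  let ?N = "Suc (\<Sum>m\<in>Poly_Mapping.keys g. Poly_Mapping.lookup m vk)"
  have "Poly_Mapping.lookup m vk \<le> (\<Sum>m\<in>Poly_Mapping.keys g. Poly_Mapping.lookup m vk)" if "m \<in> Poly_Mapping.keys g" for m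
    by (rule member_le_sum) (simp_all add: that)
  then have "\<forall>m\<in>Poly_Mapping.keys g. Poly_Mapping.lookup m vk < ?N"
    by (simp add: less_Suc_eq_le)
  with INJ_aux[of ?N] z show "g = 0" by blast
qed



definition mk :: "nat \<Rightarrow> nat \<Rightarrow> nat \<Rightarrow> nat \<Rightarrow> (V2 \<Rightarrow>\<^sub>0 nat)" where
  "mk a b c d = Poly_Mapping.single ub a + Poly_Mapping.single uq b + Poly_Mapping.single ur1 c + Poly_Mapping.single ur2 d"

lemma lookup_mk[simp]:
  "Poly_Mapping.lookup (mk a b c d) ub = a" "Poly_Mapping.lookup (mk a b c d) uq = b"
  "Poly_Mapping.lookup (mk a b c d) ur1 = c" "Poly_Mapping.lookup (mk a b c d) ur2 = d"
  by (simp_all add: mk_def lookup_add lookup_single)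

lemma mk_decomp: "m = mk (Poly_Mapping.lookup m ub) (Poly_Mapping.lookup m uq) (Poly_Mapping.lookup m ur1) (Poly_Mapping.lookup m ur2)"
proof (rule poly_mapping_eqI)
  fix v show "Poly_Mapping.lookup m v = Poly_Mapping.lookup (mk (Poly_Mapping.lookup m ub) (Poly_Mapping.lookup m uq) (Poly_Mapping.lookup m ur1) (Poly_Mapping.lookup m ur2)) v"
    by (cases v) simp_all
qed

lemma mk_eq[simp]: "mk a b c d = mk a' b' c' d' \<longleftrightarrow> a = a' \<and> b = b' \<and> c = c' \<and> d = d'"
  by (metis lookup_mk)

lemma UNIV_V2: "(UNIV :: V2 set) = {ub, uq, ur1, ur2}"
  using V2.exhaust by auto

lemma wdeg_mk: "wdeg w2 (mk a b c d) = a + 2 * b + c + d"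
proof -
  have "wdeg w2 (mk a b c d) = (\<Sum>v\<in>UNIV. w2 v * Poly_Mapping.lookup (mk a b c d) v)"
    by (rule wdeg_superset) (simp add: UNIV_V2, simp)
  also have "\<dots> = a + 2 * b + c + d" by (simp add: UNIV_V2)
  finally show ?thesis .
qed

lemma single_mk: "Poly_Mapping.single (mk a b c d) c0 = Cst c0 * bb ^ a * qq ^ b * rr1 ^ c * rr2 ^ d"
  by (simp add: Var_pow Cst_def mult_single mk_def)

lemma lookup_single_mk: "Poly_Mapping.lookup (Poly_Mapping.single (mk a b c d) c0) (mk a' b' c' d') = (if a = a' \<and> b = b' \<and> c = c' \<and> d = d' then c0 else 0)"
  by (simp add: lookup_single when_def)

lemma sol0: "(a::nat) + 2 * b + c + d = 0 \<Longrightarrow> a = 0 \<and> b = 0 \<and> c = 0 \<and> d = 0" by simp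
lemma sol1: "(a::nat) + 2 * b + c + d = 1 \<Longrightarrow> (a = 1 \<and> b = 0 \<and> c = 0 \<and> d = 0) \<or> (a = 0 \<and> b = 0 \<and> c = 1 \<and> d = 0) \<or> (a = 0 \<and> b = 0 \<and> c = 0 \<and> d = 1)"
  by presburger
lemma sol2: "(a::nat) + 2 * b + c + d = 2 \<Longrightarrow> (a = 2 \<and> b = 0 \<and> c = 0 \<and> d = 0) \<or> (a = 0 \<and> b = 1 \<and> c = 0 \<and> d = 0)
   \<or> (a = 0 \<and> b = 0 \<and> c = 2 \<and> d = 0) \<or> (a = 0 \<and> b = 0 \<and> c = 0 \<and> d = 2) \<or> (a = 1 \<and> b = 0 \<and> c = 1 \<and> d = 0)
   \<or> (a = 1 \<and> b = 0 \<and> c = 0 \<and> d = 1) \<or> (a = 0 \<and> b = 0 \<and> c = 1 \<and> d = 1)"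
  by presburger

lemma basis0:
  fixes p :: P2
  assumes "homogeneous w2 0 p"
  shows "p = Cst (Poly_Mapping.lookup p (mk 0 0 0 0))"
proof -
  have "p = Poly_Mapping.single (mk 0 0 0 0) (Poly_Mapping.lookup p (mk 0 0 0 0))"
  proof (rule poly_mapping_eqI)
    fix m
    obtain a b c d where m: "m = mk a b c d" using mk_decomp by blast
    show "Poly_Mapping.lookup p m = Poly_Mapping.lookup (Poly_Mapping.single (mk 0 0 0 0) (Poly_Mapping.lookup p (mk 0 0 0 0))) m"
    proof (cases "m \<in> Poly_Mapping.keys p")
      case True
      then have "wdeg w2 m = 0" using assms by (simp add: homogeneous_def)
      then have "a + 2 * b + c + d = 0" using m by (simp add: wdeg_mk)
      then show ?thesis using m by (auto simp: lookup_single_mk dest: sol0)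
    next
      case False then show ?thesis using m by (auto simp: lookup_single_mk in_keys_iff)
    qed
  qed
  moreover have "Poly_Mapping.single (mk 0 0 0 0) c = Cst c" for c :: complex by (simp add: single_mk)
  ultimately show ?thesis by (rule trans)
qed

lemma basis1:
  fixes p :: P2
  assumes "homogeneous w2 1 p"
  shows "\<exists>c1 c2 c3. p = Cst c1 * bb + Cst c2 * rr1 + Cst c3 * rr2"
proof -
  let ?l = "Poly_Mapping.lookup p"
  have "p = Poly_Mapping.single (mk 1 0 0 0) (?l (mk 1 0 0 0)) + Poly_Mapping.single (mk 0 0 1 0) (?l (mk 0 0 1 0))
      + Poly_Mapping.single (mk 0 0 0 1) (?l (mk 0 0 0 1))"
  proof (rule poly_mapping_eqI)
    fix m
    obtain a b c d where m: "m = mk a b c d" using mk_decomp by blast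
    show "?l m = Poly_Mapping.lookup (Poly_Mapping.single (mk 1 0 0 0) (?l (mk 1 0 0 0)) + Poly_Mapping.single (mk 0 0 1 0) (?l (mk 0 0 1 0))
      + Poly_Mapping.single (mk 0 0 0 1) (?l (mk 0 0 0 1))) m"
    proof (cases "m \<in> Poly_Mapping.keys p")
      case True
      then have "wdeg w2 m = 1" using assms by (simp add: homogeneous_def)
      then have "a + 2 * b + c + d = 1" using m by (simp add: wdeg_mk)
      from sol1[OF this] show ?thesis using m by (elim disjE) (auto simp: lookup_add lookup_single_mk)
    next
      case False then show ?thesis using m by (auto simp: lookup_add lookup_single_mk in_keys_iff)
    qed
  qed
  then have "p = Cst (?l (mk 1 0 0 0)) * bb + Cst (?l (mk 0 0 1 0)) * rr1 + Cst (?l (mk 0 0 0 1)) * rr2"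
    by (simp only: single_mk power_0 power_one_right mult_1_right)
  then show ?thesis by blast
qed

lemma basis2:
  fixes p :: P2
  assumes "homogeneous w2 2 p"
  shows "\<exists>c1 c2 c3 c4 c5 c6 c7. p = Cst c1 * bb ^ 2 + Cst c2 * qq + Cst c3 * rr1 ^ 2 + Cst c4 * rr2 ^ 2
      + Cst c5 * bb * rr1 + Cst c6 * bb * rr2 + Cst c7 * rr1 * rr2"
proof -
  let ?l = "Poly_Mapping.lookup p"
  let ?s = "\<lambda>a b c d. Poly_Mapping.single (mk a b c d) (?l (mk a b c d))"
  have "p = ?s 2 0 0 0 + ?s 0 1 0 0 + ?s 0 0 2 0 + ?s 0 0 0 2 + ?s 1 0 1 0 + ?s 1 0 0 1 + ?s 0 0 1 1"
  proof (rule poly_mapping_eqI)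
    fix m
    obtain a b c d where m: "m = mk a b c d" using mk_decomp by blast
    show "?l m = Poly_Mapping.lookup (?s 2 0 0 0 + ?s 0 1 0 0 + ?s 0 0 2 0 + ?s 0 0 0 2 + ?s 1 0 1 0 + ?s 1 0 0 1 + ?s 0 0 1 1) m"
    proof (cases "m \<in> Poly_Mapping.keys p")
      case True
      then have "wdeg w2 m = 2" using assms by (simp add: homogeneous_def)
      then have "a + 2 * b + c + d = 2" using m by (simp add: wdeg_mk)
      from sol2[OF this] show ?thesis using m by (elim disjE) (auto simp: lookup_add lookup_single_mk)
    next
      case False then show ?thesis using m by (auto simp: lookup_add lookup_single_mk in_keys_iff)
    qed
  qed
  then have "p = Cst (?l (mk 2 0 0 0)) * bb ^ 2 + Cst (?l (mk 0 1 0 0)) * qq + Cst (?l (mk 0 0 2 0)) * rr1 ^ 2 + Cst (?l (mk 0 0 0 2)) * rr2 ^ 2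
      + Cst (?l (mk 1 0 1 0)) * bb * rr1 + Cst (?l (mk 1 0 0 1)) * bb * rr2 + Cst (?l (mk 0 0 1 1)) * rr1 * rr2"
    by (simp only: single_mk power_0 power_one_right mult_1_right)
  then show ?thesis by blast
qed



lemma Cst_eq_0: "Cst x = 0 \<longleftrightarrow> x = 0"
  using Cst_inj[of x 0] by simp

definition ev1 :: "P2 \<Rightarrow> P2" where
  "ev1 = subst (\<lambda>v. case v of ub \<Rightarrow> 1 | uq \<Rightarrow> 0 | ur1 \<Rightarrow> 2 | ur2 \<Rightarrow> 2)"
definition ev2 :: "P2 \<Rightarrow> P2" where
  "ev2 = subst (\<lambda>v. case v of ub \<Rightarrow> 1 | uq \<Rightarrow> 0 | ur1 \<Rightarrow> 3 | ur2 \<Rightarrow> 1)"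

lemma ev1_simps[simp]:
  "ev1 (f + g) = ev1 f + ev1 g" "ev1 (f * g) = ev1 f * ev1 g" "ev1 (f - g) = ev1 f - ev1 g"
  "ev1 (f ^ k) = ev1 f ^ k" "ev1 0 = 0" "ev1 1 = 1" "ev1 (numeral n) = numeral n"
  "ev1 (Cst c) = Cst c" "ev1 bb = 1" "ev1 qq = 0" "ev1 rr1 = 2" "ev1 rr2 = 2"
  by (simp_all add: ev1_def)

lemma ev2_simps[simp]:
  "ev2 (f + g) = ev2 f + ev2 g" "ev2 (f * g) = ev2 f * ev2 g" "ev2 (f - g) = ev2 f - ev2 g"
  "ev2 (f ^ k) = ev2 f ^ k" "ev2 0 = 0" "ev2 1 = 1" "ev2 (numeral n) = numeral n"
  "ev2 (Cst c) = Cst c" "ev2 bb = 1" "ev2 qq = 0" "ev2 rr1 = 3" "ev2 rr2 = 1"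
  by (simp_all add: ev2_def)

lemma ev1_R: "ev1 (fst (R (Suc k))) = 1 \<and> ev1 (fst (snd (R (Suc k)))) = of_nat (Suc k) \<and> ev1 (snd (snd (R (Suc k)))) = of_nat (Suc k)"
proof (induct k)
  case 0 then show ?case by (simp add: R_1)
next
  case (Suc k)
  obtain x y z where xyz: "R (Suc k) = (x, y, z)" by (cases "R (Suc k)") auto
  with Suc show ?case by (simp add: R_step Emul_simp)
qed

lemma ev1_xh: "ev1 (xh k) = of_nat (2 * k * (k + 1))"
proof (induct k)
  case 0 then show ?case by simp
next
  case (Suc k)
  then show ?case using ev1_R[of k] by (simp add: algebra_simps)
qed

lemma ev2_R: "ev2 (fst (R (Suc k))) = 1 \<and> ev2 (fst (snd (R (Suc k)))) = 2 ^ Suc k - 1 \<and> ev2 (snd (snd (R (Suc k)))) = 1"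
proof (induct k)
  case 0 then show ?case by (simp add: R_1)
next
  case (Suc k)
  obtain x y z where xyz: "R (Suc k) = (x, y, z)" by (cases "R (Suc k)") auto
  with Suc have hx: "ev2 x = 1" and hy: "ev2 y = 2 ^ Suc k - 1" and hz: "ev2 z = 1" by simp_all
  have "ev2 (fst (R (Suc (Suc k)))) = 1" by (simp add: R_step Emul_simp xyz hx hy hz)
  moreover have "ev2 (fst (snd (R (Suc (Suc k))))) = 2 ^ Suc (Suc k) - 1"
    by (simp add: R_step Emul_simp xyz hx hy hz)
  moreover have "ev2 (snd (snd (R (Suc (Suc k))))) = 1" by (simp add: R_step Emul_simp xyz hx hy hz)
  ultimately show ?case by blast
qed

lemma ev2_xh: "ev2 (xh k) = 2 ^ (k + 2) - 4"
proof (induct k)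
  case 0 then show ?case by simp
next
  case (Suc k)
  have hy: "ev2 (fst (snd (R (Suc k)))) = 2 ^ Suc k - 1" and hz: "ev2 (snd (snd (R (Suc k)))) = 1"
    using ev2_R[of k] by simp_all
  show ?case by (simp add: Suc hy hz)
qed

lemma FL:
  fixes g :: P1 and lam c :: complex and C :: P2
  assumes H: "phi g = qq * ss * C + Cst lam * bb ^ i * fst (R (Suc n)) + Cst c * qq * (fst (snd (R (Suc n))) + snd (snd (R (Suc n))))"
  shows "g = Cst lam * b1 ^ (i + Suc n)" "lam * of_nat n + c = 0" "lam * (2 ^ (n + 2) - 4) + c * 2 ^ (n + 1) = 0"
proof -
  let ?y = "fst (snd (R (Suc n)))" and ?z = "snd (snd (R (Suc n)))"
  have "zeta (phi g) = Cst lam * bb ^ (i + Suc n)" using H by (simp add: zeta_R_x power_add)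
  then have "zeta (phi (g - Cst lam * b1 ^ (i + Suc n))) = 0" by simp
  then have g1: "g - Cst lam * b1 ^ (i + Suc n) = 0" by (rule INJ)
  then show g2: "g = Cst lam * b1 ^ (i + Suc n)" by simp
  have "qq * (ss * C + Cst lam * bb ^ i * xh n + Cst c * (?y + ?z))
      = (qq * ss * C + Cst lam * bb ^ i * fst (R (Suc n)) + Cst c * qq * (?y + ?z)) - Cst lam * bb ^ (i + Suc n)"
    by (simp add: R_x power_add algebra_simps)
  also have "\<dots> = 0" using H by (simp add: g2)
  finally have "ss * C + Cst lam * bb ^ i * xh n + Cst c * (?y + ?z) = 0"
    using qq_ne0 no_zero_divisors by blast
  note E = this
  have "ev1 (ss * C + Cst lam * bb ^ i * xh n + Cst c * (?y + ?z)) = 0" by (simp only: E ev1_simps)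
  moreover have "(Cst (lam * of_nat (2 * n * (n + 1)) + c * (of_nat (Suc n) + of_nat (Suc n))) :: P2) = ev1 (ss * C + Cst lam * bb ^ i * xh n + Cst c * (?y + ?z))"
    using ev1_R[of n] by (simp add: ev1_xh Cst_simps)
  ultimately have "(Cst (lam * of_nat (2 * n * (n + 1)) + c * (of_nat (Suc n) + of_nat (Suc n))) :: P2) = 0"
    by simp
  then have "lam * of_nat (2 * n * (n + 1)) + c * (of_nat (Suc n) + of_nat (Suc n)) = 0"
    using Cst_eq_0 by blast
  then have "(2 * of_nat (Suc n)) * (lam * of_nat n + c) = 0"
    by (simp add: algebra_simps)
  then show "lam * of_nat n + c = 0" by (simp del: of_nat_Suc)
  have "ev2 (ss * C + Cst lam * bb ^ i * xh n + Cst c * (?y + ?z)) = 0" by (simp only: E ev2_simps)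
  moreover have "(Cst (lam * (2 ^ (n + 2) - 4) + c * 2 ^ (n + 1)) :: P2) = ev2 (ss * C + Cst lam * bb ^ i * xh n + Cst c * (?y + ?z))"
    using ev2_R[of n] by (simp add: ev2_xh Cst_simps)
  ultimately have "(Cst (lam * (2 ^ (n + 2) - 4) + c * 2 ^ (n + 1)) :: P2) = 0"
    by simp
  then show "lam * (2 ^ (n + 2) - 4) + c * 2 ^ (n + 1) = 0"
    using Cst_eq_0 by blast
qed



lemma ideal_gen_iff: "a \<in> ideal_gen xs \<longleftrightarrow> (\<exists>c. a = (\<Sum>i<length xs. c i * xs ! i))"
  unfolding ideal_gen_def by blast

lemma ideal_gen_add: "a \<in> ideal_gen xs \<Longrightarrow> b \<in> ideal_gen xs \<Longrightarrow> a + b \<in> ideal_gen xs"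
proof -
  assume "a \<in> ideal_gen xs" "b \<in> ideal_gen xs"
  then obtain ca cb where "a = (\<Sum>i<length xs. ca i * xs ! i)" "b = (\<Sum>i<length xs. cb i * xs ! i)"
    unfolding ideal_gen_iff by blast
  then have "a + b = (\<Sum>i<length xs. (ca i + cb i) * xs ! i)" by (simp add: sum.distrib distrib_right)
  then show ?thesis unfolding ideal_gen_iff by (rule exI[where x="\<lambda>i. ca i + cb i"])
qed

lemma ideal_gen_mult: "a \<in> ideal_gen xs \<Longrightarrow> r * a \<in> ideal_gen xs"
proof -
  assume "a \<in> ideal_gen xs"
  then obtain ca where "a = (\<Sum>i<length xs. ca i * xs ! i)" unfolding ideal_gen_iff by blast
  then have "r * a = (\<Sum>i<length xs. (r * ca i) * xs ! i)" by (simp add: sum_distrib_left mult.assoc)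
  then show ?thesis unfolding ideal_gen_iff by (rule exI[where x="\<lambda>i. r * ca i"])
qed

lemma sum4: "(\<Sum>i<4. (h :: nat \<Rightarrow> _) i) = h 0 + h 1 + h 2 + (h 3 :: 'a::comm_monoid_add)"
  by (simp add: eval_nat_numeral add.assoc)
lemma sum3: "(\<Sum>i<3. (h :: nat \<Rightarrow> _) i) = h 0 + h 1 + (h 2 :: 'a::comm_monoid_add)"
  by (simp add: eval_nat_numeral add.assoc)

lemma JG_comb:
  assumes "G (Suc n) = (X, Y, Z)"
  shows "a * X + b * Y + c * Z \<in> JG n"
proof -
  have eq: "a * X + b * Y + c * Z = (\<Sum>i<length [X, Y, Z]. [a, b, c] ! i * [X, Y, Z] ! i)"
    by (simp add: sum3)
  have JGeq: "JG n = ideal_gen [X, Y, Z]" using assms by (simp add: JG_def entries_def)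
  show ?thesis unfolding JGeq ideal_gen_iff by (rule exI[where x="\<lambda>i. [a, b, c] ! i"]) (rule eq)
qed

lemma IR_dest:
  assumes "p \<in> IR n" "R (Suc n) = (x, y, z)"
  shows "\<exists>c0 c1 c2 c3. p = qq * ss * c0 + x * c1 + y * c2 + z * c3"
proof -
  have "IR n = ideal_gen [qq * ss, x, y, z]" using assms(2) by (simp add: IR_def entries_def)
  with assms(1) have "p \<in> ideal_gen [qq * ss, x, y, z]" by simp
  then obtain c where "p = (\<Sum>i<length [qq * ss, x, y, z]. c i * [qq * ss, x, y, z] ! i)"
    unfolding ideal_gen_iff by blast
  moreover have "(\<Sum>i<length [qq * ss, x, y, z]. c i * [qq * ss, x, y, z] ! i) = c 0 * (qq * ss) + c 1 * x + c 2 * y + c 3 * z"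
    by (simp add: sum4 numeral_2_eq_2 numeral_3_eq_3)
  ultimately have "p = qq * ss * c 0 + x * c 1 + y * c 2 + z * c 3" by (simp add: mult.commute)
  then show ?thesis by blast
qed

lemma quarter: "Cst (1/4) * (4 * (f :: ('v, complex) mpoly)) = f"
proof -
  have "Cst (1/4) * (4 :: ('v, complex) mpoly) = Cst (1/4 * 4)" by (simp only: Cst_mult Cst_numeral)
  also have "\<dots> = 1" by simp
  finally show ?thesis by (simp add: mult.assoc[symmetric])
qed

lemma symm:
  assumes e: "phi f = qq * ss * C + x * al + y * be1 + z * be2" and xyz: "R (Suc n) = (x, y, z)"
  shows "2 * phi f = qq * ss * (C + tau C) + x * (al + tau al) + y * (be1 + tau be2) + z * (be2 + tau be1)"
proof -
  have t: "tau x = x" "tau y = z" "tau z = y" using tau_R[of n] xyz by auto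
  have "phi f = tau (phi f)" by (simp add: tau_phi)
  also have "\<dots> = qq * ss * tau C + x * tau al + z * tau be1 + y * tau be2"
    by (subst e) (simp add: t algebra_simps)
  finally have "phi f = qq * ss * tau C + x * tau al + z * tau be1 + y * tau be2" .
  with e show ?thesis by algebra
qed

lemma case_e0:
  assumes e: "phi f = qq * ss * C + x * Cst a + y * Cst u + z * Cst v" and xyz: "R (Suc n) = (x, y, z)"
    and n: "n \<ge> 1"
  shows "f \<in> JG n"
proof -
  obtain X Y Z where XYZ: "G (Suc n) = (X, Y, Z)" by (cases "G (Suc n)") auto
  from PG[of n] obtain m1 m2 m3 where
    h3: "phi Z = y + z + qq * ss * m3" by (auto simp: xyz XYZ)
  have S: "2 * phi f = qq * ss * (C + tau C) + x * (Cst a + Cst a) + y * (Cst u + Cst v) + z * (Cst v + Cst u)"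
    using symm[OF e xyz] by simp
  define F' where "F' = Cst (2 * (u + v)) * Z"
  have key: "phi (4 * f - F') = qq * ss * (2 * (C + tau C) - Cst (2 * (u + v)) * m3) + Cst (4 * a) * bb ^ 0 * x + Cst 0 * qq * (y + z)"
  proof -
    have "phi (4 * f - F') = 2 * (2 * phi f) - Cst (2 * (u + v)) * phi Z" by (simp add: F'_def)
    also have "\<dots> = qq * ss * (2 * (C + tau C) - Cst (2 * (u + v)) * m3) + Cst (4 * a) * bb ^ 0 * x + Cst 0 * qq * (y + z)"
      by (simp only: S h3) (simp add: Cst_simps, algebra)
    finally show ?thesis .
  qed
  have hx: "fst (R (Suc n)) = x" and hy: "fst (snd (R (Suc n))) = y" and hz: "snd (snd (R (Suc n))) = z"
    using xyz by simp_all
  from FL[OF key[folded hx hy hz]] n have "4 * f - F' = 0"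
    by (auto simp: Cst_simps)
  then have "f = Cst (1/4) * F'" using quarter[of f] by simp
  also have "\<dots> = 0 * X + 0 * Y + (Cst (1/4) * Cst (2 * (u + v))) * Z" by (simp add: F'_def)
  finally show ?thesis using JG_comb[OF XYZ] by metis
qed


lemma JG_add: "a \<in> JG n \<Longrightarrow> b \<in> JG n \<Longrightarrow> a + b \<in> JG n"
  unfolding JG_def by (rule ideal_gen_add)
lemma JG_mult: "a \<in> JG n \<Longrightarrow> r * a \<in> JG n"
  unfolding JG_def by (rule ideal_gen_mult)

lemma JG_from4: "4 * f \<in> JG n \<Longrightarrow> f \<in> JG n"
  using JG_mult[of "4 * f" n "Cst (1/4)"] quarter[of f] by simp

lemma lin_combine2:
  fixes Q K x y z A Bv Cv D1 s D E p r m1 m2 m3 Lx Lq :: "'a::comm_ring_1"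
  assumes "2 * A + D1 * s - 2 * D = Lx" "2 * Bv + D * p - E = Lq" "2 * Cv + D * r - E = Lq"
  shows "2 * (Q * K + x * A + y * Bv + z * Cv) - (D1 * (- s * x + Q * m1) + D * (2 * x - p * y - r * z + Q * m2) + E * (y + z + Q * m3))
     = Q * (2 * K - D1 * m1 - E * m3 - D * m2) + Lx * x + Lq * (y + z)"
proof -
  have "2 * (Q * K + x * A + y * Bv + z * Cv) - (D1 * (- s * x + Q * m1) + D * (2 * x - p * y - r * z + Q * m2) + E * (y + z + Q * m3))
     = Q * (2 * K - D1 * m1 - E * m3 - D * m2) + (2 * A + D1 * s - 2 * D) * x + (2 * Bv + D * p - E) * y + (2 * Cv + D * r - E) * z"
    by (simp add: algebra_simps)
  then show ?thesis by (simp only: assms) (simp add: algebra_simps)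
qed

lemma case_e1:
  assumes e: "phi f = qq * ss * C + x * Cst a + y * (Cst u1 * bb + Cst u2 * rr1 + Cst u3 * rr2) + z * (Cst v1 * bb + Cst v2 * rr1 + Cst v3 * rr2)"
    and xyz: "R (Suc n) = (x, y, z)" and n: "n \<ge> 1"
  shows "f \<in> JG n"
proof -
  obtain X Y Z where XYZ: "G (Suc n) = (X, Y, Z)" by (cases "G (Suc n)") auto
  from PG[of n] obtain m1 m2 m3 where
    h1: "phi X = - ss * x + qq * ss * m1" and
    h2: "phi Y = 2 * x - (rr2 - bb) * y - (rr1 - bb) * z + qq * ss * m2" and
    h3: "phi Z = y + z + qq * ss * m3" by (auto simp: xyz XYZ)
  define g1 where "g1 = u1 + v1"
  define g2 where "g2 = u2 + v3"
  define g3 where "g3 = u3 + v2"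
  define e2 where "e2 = g2 - g3"
  define B where "B = Cst (2 * g1 + 2 * (g2 + g3)) * b1 + Cst (g2 + g3 + e2) * t1"
  define F' where "F' = 0 * X + Cst (2 * e2) * Y + B * Z"
  have S: "2 * phi f = qq * ss * (C + tau C) + x * (Cst a + Cst a) + y * ((Cst u1 * bb + Cst u2 * rr1 + Cst u3 * rr2) + (Cst v1 * bb + Cst v2 * rr2 + Cst v3 * rr1))
     + z * ((Cst v1 * bb + Cst v2 * rr1 + Cst v3 * rr2) + (Cst u1 * bb + Cst u2 * rr2 + Cst u3 * rr1))"
    using symm[OF e xyz] by simp
  have cx: "2 * (Cst a + Cst a) + 0 * ss - 2 * Cst (2 * e2) = Cst (4 * a - 4 * e2) * bb ^ 0"
    by (simp add: Cst_simps)
  have cy: "2 * ((Cst u1 * bb + Cst u2 * rr1 + Cst u3 * rr2) + (Cst v1 * bb + Cst v2 * rr2 + Cst v3 * rr1))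
      + Cst (2 * e2) * (rr2 - bb) - phi B = Cst 0 * qq"
    by (simp add: B_def e2_def g1_def g2_def g3_def Cst_simps) algebra
  have cz: "2 * ((Cst v1 * bb + Cst v2 * rr1 + Cst v3 * rr2) + (Cst u1 * bb + Cst u2 * rr2 + Cst u3 * rr1))
      + Cst (2 * e2) * (rr1 - bb) - phi B = Cst 0 * qq"
    by (simp add: B_def e2_def g1_def g2_def g3_def Cst_simps) algebra
  have key: "phi (4 * f - F') = qq * ss * (2 * (C + tau C) - 0 * m1 - phi B * m3 - Cst (2 * e2) * m2) + Cst (4 * a - 4 * e2) * bb ^ 0 * x + Cst 0 * qq * (y + z)"
  proof -
    have "phi (4 * f - F') = 2 * (2 * phi f) - (0 * (- ss * x + qq * ss * m1) + Cst (2 * e2) * phi Y + phi B * phi Z)" by (simp add: F'_def)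
    also have "\<dots> = qq * ss * (2 * (C + tau C) - 0 * m1 - phi B * m3 - Cst (2 * e2) * m2) + Cst (4 * a - 4 * e2) * bb ^ 0 * x + Cst 0 * qq * (y + z)"
      unfolding S h2 h3 by (rule lin_combine2[OF cx cy cz])
    finally show ?thesis .
  qed
  have hx: "fst (R (Suc n)) = x" and hy: "fst (snd (R (Suc n))) = y" and hz: "snd (snd (R (Suc n))) = z"
    using xyz by simp_all
  from FL[OF key[folded hx hy hz]] n have "4 * f - F' = 0"
    by (auto simp: Cst_simps)
  then have "4 * f = F'" by simp
  moreover have "F' \<in> JG n" unfolding F'_def by (rule JG_comb[OF XYZ])
  ultimately have "4 * f \<in> JG n" by simp
  then show ?thesis by (rule JG_from4)
qed

lemma b3_JG1: "b1 ^ 3 \<in> JG 1"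
proof -
  have G2: "G (Suc 1) = (b1 * (b1 * (2 * b1 - t1)), b1 * (2 * b1 - t1) + k1 * 2, (2 * b1 - t1) + t1 * 2)"
    using G_step[of 0] by (simp add: G_1 Amul_simp)
  have "1 * (b1 * (b1 * (2 * b1 - t1))) + 0 * (b1 * (2 * b1 - t1) + k1 * 2) + b1 ^ 2 * ((2 * b1 - t1) + t1 * 2) \<in> JG 1"
    by (rule JG_comb[OF G2])
  moreover have "1 * (b1 * (b1 * (2 * b1 - t1))) + 0 * (b1 * (2 * b1 - t1) + k1 * 2) + b1 ^ 2 * ((2 * b1 - t1) + t1 * 2) = 4 * b1 ^ 3"
    by (simp add: algebra_simps power3_eq_cube power2_eq_square)
  ultimately have "4 * b1 ^ 3 \<in> JG 1" by simp
  then show ?thesis by (rule JG_from4)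
qed

lemma case_e2:
  assumes e: "phi f = qq * ss * C + x * (Cst a1 * bb + Cst a2 * rr1 + Cst a3 * rr2)
      + y * (Cst u1 * bb ^ 2 + Cst u2 * qq + Cst u3 * rr1 ^ 2 + Cst u4 * rr2 ^ 2 + Cst u5 * bb * rr1 + Cst u6 * bb * rr2 + Cst u7 * rr1 * rr2)
      + z * (Cst v1 * bb ^ 2 + Cst v2 * qq + Cst v3 * rr1 ^ 2 + Cst v4 * rr2 ^ 2 + Cst v5 * bb * rr1 + Cst v6 * bb * rr2 + Cst v7 * rr1 * rr2)"
    and xyz: "R (Suc n) = (x, y, z)" and n: "n \<ge> 1"
  shows "f \<in> JG n"
proof -
  obtain X Y Z where XYZ: "G (Suc n) = (X, Y, Z)" by (cases "G (Suc n)") auto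
  from PG[of n] obtain m1 m2 m3 where
    h1: "phi X = - ss * x + qq * ss * m1" and
    h2: "phi Y = 2 * x - (rr2 - bb) * y - (rr1 - bb) * z + qq * ss * m2" and
    h3: "phi Z = y + z + qq * ss * m3" by (auto simp: xyz XYZ)
  define g1 where "g1 = u1 + v1"
  define g2 where "g2 = u2 + v2"
  define g3 where "g3 = u3 + v4"
  define g4 where "g4 = u4 + v3"
  define g5 where "g5 = u5 + v6"
  define g6 where "g6 = u6 + v5"
  define g7 where "g7 = u7 + v7"
  define P where "P = 2 * (a2 + a3) - 4 * (g3 - g4)"
  define lam where "lam = 4 * a1 - 4 * (g5 - g6) + 4 * P"
  define c where "c = 2 * g2 - 8 * (g3 + g4) + 8 * g7"
  define eh where "eh = Cst (g3 - g4) * (t1 + 2 * b1) + Cst (g5 - g6) * b1"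
  define B where "B = Cst (2 * g1) * b1 ^ 2 + Cst (g3 + g4) * (t1 ^ 2 + 2 * b1 * t1 + 2 * b1 ^ 2 + 2 * k1)
     + Cst (g5 + g6) * (b1 * t1 + 2 * b1 ^ 2) + Cst (2 * g7) * (b1 ^ 2 + b1 * t1 - k1) + eh * t1"
  define F' where "F' = Cst (- P) * X + (2 * eh) * Y + B * Z"
  have S: "2 * phi f = qq * ss * (C + tau C) + x * ((Cst a1 * bb + Cst a2 * rr1 + Cst a3 * rr2) + (Cst a1 * bb + Cst a2 * rr2 + Cst a3 * rr1))
      + y * ((Cst u1 * bb ^ 2 + Cst u2 * qq + Cst u3 * rr1 ^ 2 + Cst u4 * rr2 ^ 2 + Cst u5 * bb * rr1 + Cst u6 * bb * rr2 + Cst u7 * rr1 * rr2)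
           + (Cst v1 * bb ^ 2 + Cst v2 * qq + Cst v3 * rr2 ^ 2 + Cst v4 * rr1 ^ 2 + Cst v5 * bb * rr2 + Cst v6 * bb * rr1 + Cst v7 * rr2 * rr1))
      + z * ((Cst v1 * bb ^ 2 + Cst v2 * qq + Cst v3 * rr1 ^ 2 + Cst v4 * rr2 ^ 2 + Cst v5 * bb * rr1 + Cst v6 * bb * rr2 + Cst v7 * rr1 * rr2)
           + (Cst u1 * bb ^ 2 + Cst u2 * qq + Cst u3 * rr2 ^ 2 + Cst u4 * rr1 ^ 2 + Cst u5 * bb * rr2 + Cst u6 * bb * rr1 + Cst u7 * rr2 * rr1))"
    using symm[OF e xyz] by simp
  have cx: "2 * ((Cst a1 * bb + Cst a2 * rr1 + Cst a3 * rr2) + (Cst a1 * bb + Cst a2 * rr2 + Cst a3 * rr1)) + Cst (- P) * ss - 2 * (2 * phi eh) = Cst lam * bb ^ 1"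
    by (simp add: eh_def lam_def P_def g1_def g2_def g3_def g4_def g5_def g6_def g7_def Cst_simps) algebra
  have cy: "2 * ((Cst u1 * bb ^ 2 + Cst u2 * qq + Cst u3 * rr1 ^ 2 + Cst u4 * rr2 ^ 2 + Cst u5 * bb * rr1 + Cst u6 * bb * rr2 + Cst u7 * rr1 * rr2)
           + (Cst v1 * bb ^ 2 + Cst v2 * qq + Cst v3 * rr2 ^ 2 + Cst v4 * rr1 ^ 2 + Cst v5 * bb * rr2 + Cst v6 * bb * rr1 + Cst v7 * rr2 * rr1))
        + (2 * phi eh) * (rr2 - bb) - phi B = Cst c * qq"
    by (simp add: B_def eh_def c_def g1_def g2_def g3_def g4_def g5_def g6_def g7_def Cst_simps) algebra
  have cz: "2 * ((Cst v1 * bb ^ 2 + Cst v2 * qq + Cst v3 * rr1 ^ 2 + Cst v4 * rr2 ^ 2 + Cst v5 * bb * rr1 + Cst v6 * bb * rr2 + Cst v7 * rr1 * rr2)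
           + (Cst u1 * bb ^ 2 + Cst u2 * qq + Cst u3 * rr2 ^ 2 + Cst u4 * rr1 ^ 2 + Cst u5 * bb * rr2 + Cst u6 * bb * rr1 + Cst u7 * rr2 * rr1))
        + (2 * phi eh) * (rr1 - bb) - phi B = Cst c * qq"
    by (simp add: B_def eh_def c_def g1_def g2_def g3_def g4_def g5_def g6_def g7_def Cst_simps) algebra
  have key: "phi (4 * f - F') = qq * ss * (2 * (C + tau C) - Cst (- P) * m1 - phi B * m3 - 2 * phi eh * m2) + Cst lam * bb ^ 1 * x + Cst c * qq * (y + z)"
  proof -
    have "phi (4 * f - F') = 2 * (2 * phi f) - (Cst (- P) * phi X + 2 * phi eh * phi Y + phi B * phi Z)" by (simp add: F'_def)
    also have "\<dots> = qq * ss * (2 * (C + tau C) - Cst (- P) * m1 - phi B * m3 - 2 * phi eh * m2) + Cst lam * bb ^ 1 * x + Cst c * qq * (y + z)"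
      unfolding S h1 h2 h3 by (rule lin_combine2[OF cx cy cz])
    finally show ?thesis .
  qed
  have hx: "fst (R (Suc n)) = x" and hy: "fst (snd (R (Suc n))) = y" and hz: "snd (snd (R (Suc n))) = z"
    using xyz by simp_all
  note FLs = FL[OF key[folded hx hy hz]]
  have FJ: "F' \<in> JG n" unfolding F'_def by (rule JG_comb[OF XYZ])
  show ?thesis
  proof (cases "n = 1")
    case True
    have "4 * f = F' + (4 * f - F')" by simp
    also have "\<dots> = F' + Cst lam * b1 ^ 3" using FLs(1) True by (simp add: power3_eq_cube)
    finally have "4 * f = F' + Cst lam * b1 ^ 3" .
    moreover have "Cst lam * b1 ^ 3 \<in> JG n" using b3_JG1 True JG_mult by blast
    ultimately have "4 * f \<in> JG n" using FJ JG_add by metis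
    then show ?thesis by (rule JG_from4)
  next
    case False
    with n have n2: "n \<ge> 2" by simp
    have c': "c = - lam * of_nat n" using FLs(2) by (simp add: algebra_simps eq_neg_iff_add_eq_0)
    with FLs(3) have "lam * ((2 ^ (n + 2) - 4) - of_nat n * 2 ^ (n + 1)) = 0" by (simp add: algebra_simps)
    moreover have "(2 ^ (n + 2) - 4) - of_nat n * 2 ^ (n + 1) \<noteq> (0::complex)"
    proof
      assume "(2 ^ (n + 2) - 4) - of_nat n * 2 ^ (n + 1) = (0::complex)"
      then have "of_nat (2 ^ (n + 2)) = (of_nat (4 + n * 2 ^ (n + 1)) :: complex)" by (simp add: algebra_simps)
      then have "2 ^ (n + 2) = 4 + n * 2 ^ (n + 1)" using of_nat_eq_iff by blast
      moreover have "(2::nat) ^ (n + 2) = 2 * 2 ^ (n + 1)" by simp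
      moreover have "2 * 2 ^ (n + 1) \<le> n * (2::nat) ^ (n + 1)" using n2 by (intro mult_right_mono) simp_all
      ultimately show False by linarith
    qed
    ultimately have "lam = 0" by simp
    with FLs(1) have "4 * f = F'" by simp
    then have "4 * f \<in> JG n" using FJ by simp
    then show ?thesis by (rule JG_from4)
  qed
qed



lemma hom_phi_img: "homogeneous w2 (w1 v) (phi_img v)"
proof (cases v)
  case vb then show ?thesis using hom_bb by simp
next
  case vt
  have "homogeneous w2 1 (Var ur1 + Var ur2 - Cst 2 * Var ub :: P2)"
    by (intro hom_diff hom_add hom_rr1 hom_rr2 hom_mult'[OF hom_Cst hom_bb]) simp
  then show ?thesis using vt by simp
next
  case vk
  have "homogeneous w2 2 (Cst 4 * Var uq - (Var ub - Var ur1) * (Var ub - Var ur2) :: P2)"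
    by (intro hom_diff hom_mult'[OF hom_Cst hom_qq] hom_mult'[OF hom_diff[OF hom_bb hom_rr1] hom_diff[OF hom_bb hom_rr2]]) simp_all
  then show ?thesis using vk by simp
qed

lemma hom_phi: "homogeneous w1 d f \<Longrightarrow> homogeneous w2 d (phi f)"
  unfolding phi_def by (rule hom_subst[OF hom_phi_img])

lemma IR_eq: "R (Suc n) = (x, y, z) \<Longrightarrow> IR n = ideal_gen [qq * ss, x, y, z]"
  by (simp add: IR_def entries_def)

lemma IR_comb:
  assumes "R (Suc n) = (x, y, z)"
  shows "a * (qq * ss) + b * x + c * y + d * z \<in> IR n"
proof -
  have eq: "a * (qq * ss) + b * x + c * y + d * z = (\<Sum>i<length [qq * ss, x, y, z]. [a, b, c, d] ! i * [qq * ss, x, y, z] ! i)"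
    by (simp add: sum4 numeral_2_eq_2 numeral_3_eq_3)
  show ?thesis unfolding IR_eq[OF assms] ideal_gen_iff by (rule exI[where x="\<lambda>i. [a, b, c, d] ! i"]) (rule eq)
qed

lemma JG_dest:
  assumes "f \<in> JG n" "G (Suc n) = (X, Y, Z)"
  shows "\<exists>a b c. f = a * X + b * Y + c * Z"
proof -
  have "JG n = ideal_gen [X, Y, Z]" using assms(2) by (simp add: JG_def entries_def)
  with assms(1) have "f \<in> ideal_gen [X, Y, Z]" by simp
  then obtain c where "f = (\<Sum>i<length [X, Y, Z]. c i * [X, Y, Z] ! i)"
    unfolding ideal_gen_iff by blast
  moreover have "(\<Sum>i<length [X, Y, Z]. c i * [X, Y, Z] ! i) = c 0 * X + c 1 * Y + c 2 * Z"
    by (simp add: sum3 numeral_2_eq_2)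
  ultimately show ?thesis by auto
qed

lemma image_JG: "phi ` JG n \<subseteq> IR n"
proof
  fix p assume "p \<in> phi ` JG n"
  then obtain f where f: "f \<in> JG n" "p = phi f" by blast
  obtain x y z where xyz: "R (Suc n) = (x, y, z)" by (cases "R (Suc n)") auto
  obtain X Y Z where XYZ: "G (Suc n) = (X, Y, Z)" by (cases "G (Suc n)") auto
  from PG[of n] obtain m1 m2 m3 where
    h1: "phi X = - ss * x + qq * ss * m1" and
    h2: "phi Y = 2 * x - (rr2 - bb) * y - (rr1 - bb) * z + qq * ss * m2" and
    h3: "phi Z = y + z + qq * ss * m3" by (auto simp: xyz XYZ)
  from JG_dest[OF f(1) XYZ] obtain a b c where abc: "f = a * X + b * Y + c * Z" by blast
  have "p = (phi a * m1 + phi b * m2 + phi c * m3) * (qq * ss) + (- phi a * ss + 2 * phi b) * x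
      + (- phi b * (rr2 - bb) + phi c) * y + (- phi b * (rr1 - bb) + phi c) * z"
    by (simp add: f(2) abc h1 h2 h3 algebra_simps)
  then show "p \<in> IR n" using IR_comb[OF xyz] by simp
qed

lemma inj_part:
  assumes n: "n \<ge> 1" and d: "d \<le> n + 2" and hf: "homogeneous w1 d f" and mem: "phi f \<in> IR n"
  shows "f \<in> JG n"
proof -
  obtain x y z where xyz: "R (Suc n) = (x, y, z)" by (cases "R (Suc n)") auto
  from IR_dest[OF mem xyz] obtain c0 c1 c2 c3 where e0: "phi f = qq * ss * c0 + x * c1 + y * c2 + z * c3" by blast
  have hx: "homogeneous w2 (Suc n) x" and hy: "homogeneous w2 n y" and hz: "homogeneous w2 n z"
    using R_hom[of n] xyz by simp_all
  have hphi: "homogeneous w2 d (phi f)" by (rule hom_phi[OF hf])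
  define C where "C = (if 3 \<le> d then Hc w2 (d - 3) c0 else 0)"
  define al where "al = (if Suc n \<le> d then Hc w2 (d - Suc n) c1 else 0)"
  define be1 where "be1 = (if n \<le> d then Hc w2 (d - n) c2 else 0)"
  define be2 where "be2 = (if n \<le> d then Hc w2 (d - n) c3 else 0)"
  have "phi f = Hc w2 d (phi f)" by (rule Hc_hom[symmetric, OF hphi])
  also have "\<dots> = Hc w2 d (qq * ss * c0) + Hc w2 d (x * c1) + Hc w2 d (y * c2) + Hc w2 d (z * c3)"
    by (simp add: e0 Hc_add)
  also have "\<dots> = qq * ss * C + x * al + y * be1 + z * be2"
    by (simp add: Hc_mult[OF hom_qs] Hc_mult[OF hx] Hc_mult[OF hy] Hc_mult[OF hz] C_def al_def be1_def be2_def)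
  finally have e: "phi f = qq * ss * C + x * al + y * be1 + z * be2" .
  have hal: "homogeneous w2 (d - Suc n) al" by (simp add: al_def Hc_homogeneous)
  have hbe1: "homogeneous w2 (d - n) be1" by (simp add: be1_def Hc_homogeneous)
  have hbe2: "homogeneous w2 (d - n) be2" by (simp add: be2_def Hc_homogeneous)
  consider "d - n = 0" | "d - n = 1" | "d - n = 2" using d by linarith
  then show ?thesis
  proof cases
    case 1
    then have "d - Suc n = 0" by simp
    then have "al = Cst (Poly_Mapping.lookup al (mk 0 0 0 0))" using hal basis0 by simp
    moreover have "be1 = Cst (Poly_Mapping.lookup be1 (mk 0 0 0 0))" using hbe1 basis0 1 by simp
    moreover have "be2 = Cst (Poly_Mapping.lookup be2 (mk 0 0 0 0))" using hbe2 basis0 1 by simp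
    ultimately show ?thesis using case_e0[OF _ xyz n] e by metis
  next
    case 2
    then have "d - Suc n = 0" by simp
    then have "al = Cst (Poly_Mapping.lookup al (mk 0 0 0 0))" using hal basis0 by simp
    moreover obtain u1 u2 u3 where "be1 = Cst u1 * bb + Cst u2 * rr1 + Cst u3 * rr2" using hbe1 basis1 2 by force
    moreover obtain v1 v2 v3 where "be2 = Cst v1 * bb + Cst v2 * rr1 + Cst v3 * rr2" using hbe2 basis1 2 by force
    ultimately show ?thesis using case_e1[OF _ xyz n] e by metis
  next
    case 3
    then have "d - Suc n = 1" by simp
    then obtain a1 a2 a3 where "al = Cst a1 * bb + Cst a2 * rr1 + Cst a3 * rr2" using hal basis1 by force
    moreover obtain u1 u2 u3 u4 u5 u6 u7 where "be1 = Cst u1 * bb ^ 2 + Cst u2 * qq + Cst u3 * rr1 ^ 2 + Cst u4 * rr2 ^ 2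
      + Cst u5 * bb * rr1 + Cst u6 * bb * rr2 + Cst u7 * rr1 * rr2" using hbe1 basis2 3 by force
    moreover obtain v1 v2 v3 v4 v5 v6 v7 where "be2 = Cst v1 * bb ^ 2 + Cst v2 * qq + Cst v3 * rr1 ^ 2 + Cst v4 * rr2 ^ 2
      + Cst v5 * bb * rr1 + Cst v6 * bb * rr2 + Cst v7 * rr1 * rr2" using hbe2 basis2 3 by force
    ultimately show ?thesis using case_e2[OF _ xyz n] e by metis
  qed
qed

theorem lemma4p29:
  fixes n :: nat
  assumes "n \<ge> 1"
  shows "(\<forall>f g. phi (f + g) = phi f + phi g \<and> phi (f * g) = phi f * phi g)
       \<and> phi 1 = 1
       \<and> (\<forall>c. phi (Cst c) = Cst c)
       \<and> (\<forall>d f. homogeneous w1 d f \<longrightarrow> homogeneous w2 d (phi f))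
       \<and> phi ` JG n \<subseteq> IR n
       \<and> (\<forall>d f. d \<le> n + 2 \<longrightarrow> homogeneous w1 d f \<longrightarrow> phi f \<in> IR n \<longrightarrow> f \<in> JG n)"
  using hom_phi image_JG inj_part[OF assms] by simp


end
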